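(* Let $\mathcal M_1,\mathcal M_2$ and the relation $Z$ be as defined in the context. Then $Z$ is a CD-asimulation between $\mathcal M_1$ and $\mathcal M_2$.
   Context: Let $\mathbb N=\{0,1,2,\dots\}$ and for $k>0$, $l\ge0$ let $k\mathbb N+l=\{kn+l: n\in\mathbb N\}$, $k\mathbb N=k\mathbb N+0$. A quasi-partition is a triple $(A,B,C)$ of pairwise disjoint subsets of $\mathbb N$ with $A\cup B\cup C=\mathbb N$, $A$ and $C$ infinite, and $B$ either empty or infinite. Order quasi-partitions by $(A,B,C)\sqsubseteq(D,E,F)$ iff $A\subseteq D$ and $F\subseteq C$. Let $\mathbf v=(\mathbf v_1,\mathbf v_2,\mathbf v_3)=(3\mathbb N,3\mathbb N+1,3\mathbb N+2)$ and $\mathbf w=(2\mathbb N,\emptyset,2\mathbb N+1)$. A G-model is $\langle W,\le,v_0,D,\phi\rangle$ with $\le$ a reflexive transitive relation on the nonempty set $W$, base point $v_0\le v$ for all $v$, nonempty domain $D$, and for each $k$-ary predicate symbol a monotone set $\phi(P)\subseteq W\times D^k$ (if $v\le w$ and $\langle v,\vec a\rangle\in\phi(P)$ then $\langle w,\vec a\rangle\in\phi(P)$); atomic forcing: $v\Vdash P\vec{\mathbf a}$ iff $\langle v,\vec a\rangle\in\phi(P)$. $\mathcal M_1$: states $W_1$ = all quasi-partitions $(A,B,C)$ with $\mathbf v\sqsubseteq(A,B,C)$ and $B\cap\mathbf v_2$ infinite; base point $\mathbf v$. $\mathcal M_2$: states $W_2$ = all quasi-partitions $(A,B,C)$ with $\mathbf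 w\sqsubseteq(A,B,C)$ and $B\ne\emptyset$, together with $\mathbf w$; base point $\mathbf w$. In both, the order is $\sqsubseteq$, the domain is $\mathbb N$, and the only predicate symbols are unary $P,Q$ with: state $s=(s_1,s_2,s_3)$ forces $P\mathbf a$ iff $a\in s_1\cup s_2$, and forces $Q\mathbf a$ iff $a\in s_1$. $\Vdash_i$, $\le_i$ denote forcing and order in $\mathcal M_i$. For $\vec d,\vec e\in\mathbb N^k$, $[\vec d\mapsto\vec e]=\{\langle d_l,e_l\rangle:1\le l\le k\}$. Define $Z$: for $\{i,j\}=\{1,2\}$, $k\ge0$, $(A,B,C)\in W_i$, $\vec d\in\mathbb N^k$, $(D,E,F)\in W_j$, $\vec e\in\mathbb N^k$, we have $((A,B,C),\vec d)\,Z\,((D,E,F),\vec e)$ iff (a) $[\vec d\mapsto\vec e]$ is a bijection (from the set of entries of $\vec d$ to the set of entries of $\vec e$); (b) for $1\le l\le k$, $d_l\in A$ implies $e_l\in D$; (c) for $1\le l\le k$, $d_l\in B$ implies $e_l\in D\cup E$. No other pairs are in $Z$. A CD-asimulation between G-models $\mathcal M_1=\langle W_1,\le_1,\dots,D_1,\phi_1\rangle$ and $\mathcal M_2=\langle W_2,\le_2,\dots,D_2,\phi_2\rangle$ is a relation $Z\subseteq\bigcup_{k\ge0}[(W_1\times D_1^k)\times(W_2\times D_2^k)]\cup[(W_2\times D_2^k)\times(W_1\times D_1^k)]$ such that for all $\{i,j\}=\{1,2\}$: (1) if $(v,\vec d)Z(w,\vec e)$ with $v\in W_i$, and $v\Vdash_i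 P[\vec d]$ for an atomic formula $P[\vec x]$ with free variables among $x_1,\dots,x_k$, then $w\Vdash_j P[\vec e]$; (2) if $(t,\vec d)Z(u,\vec e)$ with $t\in W_i$, $u\in W_j$, and $u\le_j v$, then there is $w\in W_i$ with $t\le_i w$, $(w,\vec d)Z(v,\vec e)$ and $(v,\vec e)Z(w,\vec d)$; (3) if $t\in W_i$, $(t,\vec d)Z(u,\vec e)$ and $f\in D_i$, then there is $g\in D_j$ with $(t,\vec d f)Z(u,\vec e g)$; (4) if $t\in W_i$, $(t,\vec d)Z(u,\vec e)$ and $g\in D_j$, then there is $f\in D_i$ with $(t,\vec d f)Z(u,\vec e g)$, where $\vec d f$ is $\vec d$ extended by $f$. *)

theory Defs
  imports Main
begin

datatype psym = PP | QQ

fun arity :: "psym \<Rightarrow> nat" where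
  "arity PP = 1" | "arity QQ = 1"

text \<open>Atomic formulas: a predicate symbol applied to a list of variables;
  variable x_(l+1) is represented by the index l (0-based).\<close>
datatype atom = Atom psym "nat list"

definition atom_vars_below :: "atom \<Rightarrow> nat \<Rightarrow> bool" where
  "atom_vars_below a k = (case a of Atom p xs \<Rightarrow> length xs = arity p \<and> (\<forall>x\<in>set xs. x < k))"

record ('w, 'd) gmodel =
  W :: "'w set"
  le :: "'w \<Rightarrow> 'w \<Rightarrow> bool"
  base :: 'w
  dom :: "'d set"
  phi :: "psym \<Rightarrow> ('w \<times> 'd list) set"

definition forces_atom :: "('w, 'd) gmodel \<Rightarrow> 'w \<Rightarrow> 'd list \<Rightarrow> atom \<Rightarrow> bool" where
  "forces_atom M v ds a = (case a of Atom p xs \<Rightarrow> (v, map (\<lambda>x. ds ! x) xs) \<in> phi M p)"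

text \<open>A CD-asimulation is given by its two components:
  Zmn \<subseteq> (W_M \<times> D_M^k) \<times> (W_N \<times> D_N^k) and Znm the other direction.
  asim_dir states conditions (1)--(4) for the case where the left element lives in M.\<close>
definition asim_dir ::
  "('w1, 'd1) gmodel \<Rightarrow> ('w2, 'd2) gmodel \<Rightarrow>
   (('w1 \<times> 'd1 list) \<times> ('w2 \<times> 'd2 list)) set \<Rightarrow>
   (('w2 \<times> 'd2 list) \<times> ('w1 \<times> 'd1 list)) set \<Rightarrow> bool" where
  "asim_dir M N Zmn Znm \<longleftrightarrow>
     (\<forall>v d w e. ((v, d), (w, e)) \<in> Zmn \<longrightarrow>
        v \<in> W M \<and> set d \<subseteq> dom M \<and> w \<in> W N \<and> set e \<subseteq> dom N \<and> length d = length e) \<and>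
     (\<forall>v d w e a. ((v, d), (w, e)) \<in> Zmn \<longrightarrow> atom_vars_below a (length d) \<longrightarrow>
        forces_atom M v d a \<longrightarrow> forces_atom N w e a) \<and>
     (\<forall>t d u e v. ((t, d), (u, e)) \<in> Zmn \<longrightarrow> v \<in> W N \<longrightarrow> le N u v \<longrightarrow>
        (\<exists>w \<in> W M. le M t w \<and> ((w, d), (v, e)) \<in> Zmn \<and> ((v, e), (w, d)) \<in> Znm)) \<and>
     (\<forall>t d u e f. ((t, d), (u, e)) \<in> Zmn \<longrightarrow> f \<in> dom M \<longrightarrow>
        (\<exists>g \<in> dom N. ((t, d @ [f]), (u, e @ [g])) \<in> Zmn)) \<and>
     (\<forall>t d u e g. ((t, d), (u, e)) \<in> Zmn \<longrightarrow> g \<in> dom N \<longrightarrow>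
        (\<exists>f \<in> dom M. ((t, d @ [f]), (u, e @ [g])) \<in> Zmn))"

definition CD_asimulation ::
  "('w1, 'd1) gmodel \<Rightarrow> ('w2, 'd2) gmodel \<Rightarrow>
   (('w1 \<times> 'd1 list) \<times> ('w2 \<times> 'd2 list)) set \<Rightarrow>
   (('w2 \<times> 'd2 list) \<times> ('w1 \<times> 'd1 list)) set \<Rightarrow> bool" where
  "CD_asimulation M1 M2 Z12 Z21 \<longleftrightarrow> asim_dir M1 M2 Z12 Z21 \<and> asim_dir M2 M1 Z21 Z12"

type_synonym qpart = "nat set \<times> nat set \<times> nat set"

definition quasi_partition :: "qpart \<Rightarrow> bool" where
  "quasi_partition s = (case s of (A, B, C) \<Rightarrow>
     A \<inter> B = {} \<and> A \<inter> C = {} \<and> B \<inter> C = {} \<and> A \<union> B \<union> C = UNIV \<and>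
     infinite A \<and> infinite C \<and> (B = {} \<or> infinite B))"

definition qle :: "qpart \<Rightarrow> qpart \<Rightarrow> bool" where
  "qle s t = (case s of (A, B, C) \<Rightarrow> case t of (D, E, F) \<Rightarrow> A \<subseteq> D \<and> F \<subseteq> C)"

definition kN :: "nat \<Rightarrow> nat \<Rightarrow> nat set" where
  "kN k l = {k * n + l | n. True}"

definition vv :: qpart where "vv = (kN 3 0, kN 3 1, kN 3 2)"
definition ww :: qpart where "ww = (kN 2 0, {}, kN 2 1)"

definition W1 :: "qpart set" where
  "W1 = {(A, B, C). quasi_partition (A, B, C) \<and> qle vv (A, B, C) \<and> infinite (B \<inter> kN 3 1)}"

definition W2 :: "qpart set" where
  "W2 = {(A, B, C). quasi_partition (A, B, C) \<and> qle ww (A, B, C) \<and> B \<noteq> {}} \<union> {ww}"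

definition phiPQ :: "qpart set \<Rightarrow> psym \<Rightarrow> (qpart \<times> nat list) set" where
  "phiPQ Ws p = {(s, [a]) | s a. s \<in> Ws \<and>
     (case s of (A, B, C) \<Rightarrow> (case p of PP \<Rightarrow> a \<in> A \<union> B | QQ \<Rightarrow> a \<in> A))}"

definition M1 :: "(qpart, nat) gmodel" where
  "M1 = \<lparr>W = W1, le = qle, base = vv, dom = UNIV, phi = phiPQ W1\<rparr>"

definition M2 :: "(qpart, nat) gmodel" where
  "M2 = \<lparr>W = W2, le = qle, base = ww, dom = UNIV, phi = phiPQ W2\<rparr>"

definition map_rel :: "nat list \<Rightarrow> nat list \<Rightarrow> (nat \<times> nat) set" where
  "map_rel d e = {(d ! l, e ! l) | l. l < length d}"

definition is_bijection :: "(nat \<times> nat) set \<Rightarrow> nat set \<Rightarrow> nat set \<Rightarrow> bool" where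
  "is_bijection R X Y \<longleftrightarrow> R \<subseteq> X \<times> Y \<and>
     (\<forall>x\<in>X. \<exists>!y. (x, y) \<in> R) \<and> (\<forall>y\<in>Y. \<exists>!x. (x, y) \<in> R)"

definition Zcond :: "qpart \<Rightarrow> nat list \<Rightarrow> qpart \<Rightarrow> nat list \<Rightarrow> bool" where
  "Zcond s d t e = (case s of (A, B, C) \<Rightarrow> case t of (D, E, F) \<Rightarrow>
     length d = length e \<and>
     is_bijection (map_rel d e) (set d) (set e) \<and>
     (\<forall>l < length d. d ! l \<in> A \<longrightarrow> e ! l \<in> D) \<and>
     (\<forall>l < length d. d ! l \<in> B \<longrightarrow> e ! l \<in> D \<union> E))"

definition Z12 :: "((qpart \<times> nat list) \<times> (qpart \<times> nat list)) set" where
  "Z12 = {((s, d), (t, e)). s \<in> W1 \<and> t \<in> W2 \<and> Zcond s d t e}"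

definition Z21 :: "((qpart \<times> nat list) \<times> (qpart \<times> nat list)) set" where
  "Z21 = {((s, d), (t, e)). s \<in> W2 \<and> t \<in> W1 \<and> Zcond s d t e}"

end

theory Submission imports Defs begin

lemma bij_compat:
  assumes "length d = length e"
  shows "is_bijection (map_rel d e) (set d) (set e) \<longleftrightarrow>
    (\<forall>l<length d. \<forall>l'<length d. d!l = d!l' \<longleftrightarrow> e!l = e!l')"
proof
  assume b: "is_bijection (map_rel d e) (set d) (set e)"
  show "\<forall>l<length d. \<forall>l'<length d. d!l = d!l' \<longleftrightarrow> e!l = e!l'"
  proof (intro allI impI iffI)
    fix l l' assume l: "l < length d" "l' < length d"
    { assume "d!l = d!l'"
      have "(d!l, e!l) \<in> map_rel d e" "(d!l, e!l') \<in> map_rel d e"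
        using l \<open>d!l = d!l'\<close> unfolding map_rel_def by (auto, metis)
      moreover have "d!l \<in> set d" using l by simp
      ultimately show "e!l = e!l'" using b unfolding is_bijection_def by blast }
    { assume "e!l = e!l'"
      have "(d!l, e!l) \<in> map_rel d e" "(d!l', e!l) \<in> map_rel d e"
        using l \<open>e!l = e!l'\<close> unfolding map_rel_def by auto
      moreover have "e!l \<in> set e" using l assms by simp
      ultimately show "d!l = d!l'" using b unfolding is_bijection_def by blast }
  qed
next
  assume c: "\<forall>l<length d. \<forall>l'<length d. d!l = d!l' \<longleftrightarrow> e!l = e!l'"
  show "is_bijection (map_rel d e) (set d) (set e)"
    unfolding is_bijection_def
  proof (intro conjI ballI)
    show "map_rel d e \<subseteq> set d \<times> set e" using assms unfolding map_rel_def by auto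
  next
    fix x assume "x \<in> set d"
    then obtain l where l: "l < length d" "x = d!l" by (auto simp: in_set_conv_nth)
    show "\<exists>!y. (x, y) \<in> map_rel d e"
    proof
      show "(x, e!l) \<in> map_rel d e" using l unfolding map_rel_def by auto
    next
      fix y assume "(x, y) \<in> map_rel d e"
      then obtain l' where "l' < length d" "x = d!l'" "y = e!l'" unfolding map_rel_def by auto
      then show "y = e!l" using c l by metis
    qed
  next
    fix y assume "y \<in> set e"
    then obtain l where l: "l < length d" "y = e!l" using assms by (auto simp: in_set_conv_nth)
    show "\<exists>!x. (x, y) \<in> map_rel d e"
    proof
      show "(d!l, y) \<in> map_rel d e" using l unfolding map_rel_def by auto
    next
      fix x assume "(x, y) \<in> map_rel d e"
      then obtain l' where "l' < length d" "x = d!l'" "y = e!l'" unfolding map_rel_def by auto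
      then show "x = d!l" using c l by metis
    qed
  qed
qed

lemma Zcond_alt:
  "Zcond (A,B,C) d (D,E,F) e \<longleftrightarrow> length d = length e \<and>
    (\<forall>l<length d. \<forall>l'<length d. d!l = d!l' \<longleftrightarrow> e!l = e!l') \<and>
     (\<forall>l < length d. d ! l \<in> A \<longrightarrow> e ! l \<in> D) \<and>
     (\<forall>l < length d. d ! l \<in> B \<longrightarrow> e ! l \<in> D \<union> E)"
  unfolding Zcond_def using bij_compat by auto

lemma kN_iff: "l < k \<Longrightarrow> x \<in> kN k l \<longleftrightarrow> x mod k = l"
  unfolding kN_def by (auto, metis div_mult_mod_eq add.commute mult.commute)

lemma kN_inf: "k > 0 \<Longrightarrow> infinite (kN k l)"
proof
  assume k: "k > 0" and f: "finite (kN k l)"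
  have "kN k l = range (\<lambda>n. k*n+l)" unfolding kN_def by auto
  moreover have "inj (\<lambda>n. k*n+l)" using k by (auto simp: inj_def)
  ultimately show False using f finite_imageD by fastforce
qed

lemma qp_ww: "quasi_partition ww"
  unfolding ww_def quasi_partition_def using kN_inf[of 2] by (auto simp: kN_iff)

lemma qle_trans: "qle a b \<Longrightarrow> qle b c \<Longrightarrow> qle a c"
  unfolding qle_def by (auto split: prod.splits)

lemma build:
  assumes qpb: "quasi_partition (b1,b2,b3)" and infb: "infinite b2"
    and tb: "qle (a1,a2,a3) (b1,b2,b3)" and qpa: "quasi_partition (a1,a2,a3)"
    and qpc: "quasi_partition (c1,c2,c3)" and qpv: "quasi_partition (v1,v2,v3)"
    and cv: "qle (c1,c2,c3) (v1,v2,v3)"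
    and Z: "Zcond (a1,a2,a3) d (c1,c2,c3) e"
  shows "\<exists>w1 w2 w3. quasi_partition (w1,w2,w3) \<and> qle (a1,a2,a3) (w1,w2,w3) \<and>
     b2 - set d \<subseteq> w2 \<and> Zcond (w1,w2,w3) d (v1,v2,v3) e \<and> Zcond (v1,v2,v3) e (w1,w2,w3) d"
proof -
  have len: "length d = length e"
    and cp: "\<forall>l<length d. \<forall>l'<length d. d!l = d!l' \<longleftrightarrow> e!l = e!l'"
    and ZA: "\<forall>l < length d. d ! l \<in> a1 \<longrightarrow> e ! l \<in> c1"
    and ZB: "\<forall>l < length d. d ! l \<in> a2 \<longrightarrow> e ! l \<in> c1 \<union> c2"
    using Z by (auto simp: Zcond_alt)
  have key: "(\<exists>l'<length d. d!l' = d!l \<and> e!l' \<in> V) \<longleftrightarrow> e!l \<in> V" if "l < length d" for V l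
    using cp that by metis
  define S where "S V b = {x. (x \<in> set d \<and> (\<exists>l<length d. d!l = x \<and> e!l \<in> V)) \<or> (x \<notin> set d \<and> x \<in> b)}" for V b
  have Sd: "d!l \<in> S V b \<longleftrightarrow> e!l \<in> V" if "l < length d" for V b l
    using key[OF that, of V] that unfolding S_def by auto
  have Sn: "x \<notin> set d \<Longrightarrow> x \<in> S V b \<longleftrightarrow> x \<in> b" for x V b
    unfolding S_def by auto
  have vdis: "v1 \<inter> v2 = {}" "v1 \<inter> v3 = {}" "v2 \<inter> v3 = {}" "v1 \<union> v2 \<union> v3 = UNIV"
    using qpv unfolding quasi_partition_def by auto
  have bdis: "b1 \<inter> b2 = {}" "b1 \<inter> b3 = {}" "b2 \<inter> b3 = {}" "b1 \<union> b2 \<union> b3 = UNIV"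
    "infinite b1" "infinite b3"
    using qpb unfolding quasi_partition_def by auto
  have adis: "a1 \<union> a2 \<union> a3 = UNIV" using qpa unfolding quasi_partition_def by auto
  have cdis: "c1 \<inter> c3 = {}" "c2 \<inter> c3 = {}" using qpc unfolding quasi_partition_def by auto
  have cvs: "c1 \<subseteq> v1" "v3 \<subseteq> c3" using cv unfolding qle_def by auto
  have abs: "a1 \<subseteq> b1" "b3 \<subseteq> a3" using tb unfolding qle_def by auto
  let ?w1 = "S v1 b1" and ?w2 = "S v2 b2" and ?w3 = "S v3 b3"
  have cases: "P x" if "\<And>l. l < length d \<Longrightarrow> x = d!l \<Longrightarrow> P x" "x \<notin> set d \<Longrightarrow> P x" for P x
    using that by (metis in_set_conv_nth)
  have sub: "b - set d \<subseteq> S V b" for V b using Sn by auto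
  have qpw: "quasi_partition (?w1, ?w2, ?w3)"
    unfolding quasi_partition_def
  proof (simp, intro conjI)
    have pt: "x \<notin> ?w1 \<inter> ?w2 \<and> x \<notin> ?w1 \<inter> ?w3 \<and> x \<notin> ?w2 \<inter> ?w3 \<and> x \<in> ?w1 \<union> ?w2 \<union> ?w3" for x
    proof (cases "x \<in> set d")
      case True
      then obtain l where l: "l < length d" "x = d!l" by (auto simp: in_set_conv_nth)
      show ?thesis unfolding l(2) Int_iff Un_iff Sd[OF l(1)] using vdis by blast
    next
      case False
      show ?thesis unfolding Int_iff Un_iff Sn[OF False] using bdis by blast
    qed
    show "?w1 \<inter> ?w2 = {}" "?w1 \<inter> ?w3 = {}" "?w2 \<inter> ?w3 = {}" "?w1 \<union> ?w2 \<union> ?w3 = UNIV"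
      using pt by blast+
  next
    show "infinite ?w1" using sub[of b1 v1] bdis(5) Diff_infinite_finite finite_set infinite_super by blast
    show "infinite ?w3" using sub[of b3 v3] bdis(6) Diff_infinite_finite finite_set infinite_super by blast
    have "infinite ?w2" using sub[of b2 v2] infb Diff_infinite_finite finite_set infinite_super by blast
    then show "?w2 = {} \<or> infinite ?w2" by blast
  qed
  have qaw: "qle (a1,a2,a3) (?w1,?w2,?w3)"
    unfolding qle_def
  proof (simp, intro conjI subsetI)
    fix x assume x: "x \<in> a1"
    show "x \<in> ?w1"
    proof (cases "x \<in> set d")
      case True
      then obtain l where l: "l < length d" "x = d!l" by (auto simp: in_set_conv_nth)
      show ?thesis unfolding l(2) Sd[OF l(1)] using ZA l x cvs by blast
    next
      case False
      show ?thesis unfolding Sn[OF False] using x abs by blast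
    qed
  next
    fix x assume x: "x \<in> ?w3"
    show "x \<in> a3"
    proof (cases "x \<in> set d")
      case True
      then obtain l where l: "l < length d" "x = d!l" by (auto simp: in_set_conv_nth)
      have "e!l \<in> c3" using x unfolding l(2) Sd[OF l(1)] using cvs by blast
      then show ?thesis using ZA ZB l cdis adis by blast
    next
      case False
      show ?thesis using x unfolding Sn[OF False] using abs by blast
    qed
  qed
  have z1: "Zcond (?w1,?w2,?w3) d (v1,v2,v3) e"
    unfolding Zcond_alt using len cp Sd by blast
  have z2: "Zcond (v1,v2,v3) e (?w1,?w2,?w3) d"
    unfolding Zcond_alt using len cp Sd by (metis UnI1 UnI2)
  show ?thesis using qpw qaw z1 z2 sub[of b2 v2] by blast
qed

lemma ext:
  assumes "Zcond (A,B,C) d (D,E,F) e" and "\<And>l. l<length d \<Longrightarrow> d!l = f \<longleftrightarrow> e!l = g"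
    and "f\<in>A \<Longrightarrow> g\<in>D" and "f\<in>B \<Longrightarrow> g\<in>D\<union>E"
  shows "Zcond (A,B,C) (d@[f]) (D,E,F) (e@[g])"
proof -
  have len: "length d = length e"
    and cp: "\<forall>l<length d. \<forall>l'<length d. d!l = d!l' \<longleftrightarrow> e!l = e!l'"
    and ZA: "\<forall>l < length d. d ! l \<in> A \<longrightarrow> e ! l \<in> D"
    and ZB: "\<forall>l < length d. d ! l \<in> B \<longrightarrow> e ! l \<in> D \<union> E"
    using assms(1) by (auto simp: Zcond_alt)
  show ?thesis unfolding Zcond_alt
  proof (intro conjI allI impI)
    show "length (d @ [f]) = length (e @ [g])" using len by simp
  next
    fix l l' assume l: "l < length (d@[f])" "l' < length (d@[f])"
    then consider "l < length d" "l' < length d" | "l < length d" "l' = length d"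
      | "l = length d" "l' < length d" | "l = length d" "l' = length d" by fastforce
    then show "(d @ [f]) ! l = (d @ [f]) ! l' \<longleftrightarrow> (e @ [g]) ! l = (e @ [g]) ! l'"
      by cases (use cp assms(2) len in \<open>auto simp: nth_append\<close>)
  next
    fix l assume l: "l < length (d@[f])" "(d @ [f]) ! l \<in> A"
    then consider "l < length d" | "l = length d" by fastforce
    then show "(e @ [g]) ! l \<in> D" by cases (use ZA assms(3) len l in \<open>auto simp: nth_append\<close>)
  next
    fix l assume l: "l < length (d@[f])" "(d @ [f]) ! l \<in> B"
    then consider "l < length d" | "l = length d" by fastforce
    then show "(e @ [g]) ! l \<in> D \<union> E" by cases (use ZB assms(4) len l in \<open>auto simp: nth_append\<close>)
  qed
qed

lemma ext3:
  assumes Z: "Zcond (A,B,C) d (D,E,F) e" and inf: "infinite D"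
  shows "\<exists>g. Zcond (A,B,C) (d@[f]) (D,E,F) (e@[g])"
proof -
  have len: "length d = length e"
    and cp: "\<forall>l<length d. \<forall>l'<length d. d!l = d!l' \<longleftrightarrow> e!l = e!l'"
    and ZA: "\<forall>l < length d. d ! l \<in> A \<longrightarrow> e ! l \<in> D"
    and ZB: "\<forall>l < length d. d ! l \<in> B \<longrightarrow> e ! l \<in> D \<union> E"
    using Z by (auto simp: Zcond_alt)
  show ?thesis
  proof (cases "f \<in> set d")
    case True
    then obtain k where k: "k < length d" "f = d!k" by (auto simp: in_set_conv_nth)
    show ?thesis
      by (rule exI[of _ "e!k"], rule ext[OF Z]) (use k cp ZA ZB in auto)
  next
    case False
    have "infinite (D - set e)" using inf by (simp add: Diff_infinite_finite)
    then obtain g where g: "g \<in> D" "g \<notin> set e" by (metis Diff_iff finite.emptyI infinite_imp_nonempty ex_in_conv)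
    show ?thesis
      by (rule exI[of _ g], rule ext[OF Z]) (use g False len nth_mem in auto)
  qed
qed

lemma ext4:
  assumes Z: "Zcond (A,B,C) d (D,E,F) e" and inf: "infinite C" and dis: "A \<inter> C = {}" "B \<inter> C = {}"
  shows "\<exists>f. Zcond (A,B,C) (d@[f]) (D,E,F) (e@[g])"
proof -
  have len: "length d = length e"
    and cp: "\<forall>l<length d. \<forall>l'<length d. d!l = d!l' \<longleftrightarrow> e!l = e!l'"
    and ZA: "\<forall>l < length d. d ! l \<in> A \<longrightarrow> e ! l \<in> D"
    and ZB: "\<forall>l < length d. d ! l \<in> B \<longrightarrow> e ! l \<in> D \<union> E"
    using Z by (auto simp: Zcond_alt)
  show ?thesis
  proof (cases "g \<in> set e")
    case True
    then obtain k where k: "k < length d" "g = e!k" using len by (auto simp: in_set_conv_nth)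
    show ?thesis
      by (rule exI[of _ "d!k"], rule ext[OF Z]) (use k cp ZA ZB in auto)
  next
    case False
    have "infinite (C - set d)" using inf by (simp add: Diff_infinite_finite)
    then obtain f where f: "f \<in> C" "f \<notin> set d" by (metis Diff_iff finite.emptyI infinite_imp_nonempty ex_in_conv)
    show ?thesis
      by (rule exI[of _ f], rule ext[OF Z]) (metis f(2) False len nth_mem, use f dis in blast, use f dis in blast)
  qed
qed

lemma asim_gen:
  assumes M: "W M = Wa" "le M = qle" "dom M = UNIV" "phi M = phiPQ Wa"
    and N: "W N = Wb" "le N = qle" "dom N = UNIV" "phi N = phiPQ Wb"
    and Zmn: "Zmn = {((s,d),(t,e)). s\<in>Wa \<and> t\<in>Wb \<and> Zcond s d t e}"
    and Znm: "Znm = {((s,d),(t,e)). s\<in>Wb \<and> t\<in>Wa \<and> Zcond s d t e}"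
    and qpA: "\<And>s. s\<in>Wa \<Longrightarrow> quasi_partition s"
    and qpB: "\<And>s. s\<in>Wb \<Longrightarrow> quasi_partition s"
    and step: "\<And>t d u e v. t\<in>Wa \<Longrightarrow> u\<in>Wb \<Longrightarrow> v\<in>Wb \<Longrightarrow> qle u v \<Longrightarrow> Zcond t d u e
       \<Longrightarrow> \<exists>w\<in>Wa. qle t w \<and> Zcond w d v e \<and> Zcond v e w d"
  shows "asim_dir M N Zmn Znm"
  unfolding asim_dir_def
proof (intro conjI; intro allI impI)
  fix v d w e assume "((v, d), w, e) \<in> Zmn"
  then have "v \<in> Wa" "w \<in> Wb" "Zcond v d w e" using Zmn by auto
  moreover have "length d = length e" using \<open>Zcond v d w e\<close>
    by (cases v; cases w) (simp add: Zcond_alt)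
  ultimately show "v \<in> W M \<and> set d \<subseteq> dom M \<and> w \<in> W N \<and> set e \<subseteq> dom N \<and> length d = length e"
    using M N by auto
next
  fix v d w e a assume Z: "((v, d), w, e) \<in> Zmn" and av: "atom_vars_below a (length d)"
    and fa: "forces_atom M v d a"
  have vw: "v \<in> Wa" "w \<in> Wb" "Zcond v d w e" using Z Zmn by auto
  obtain p xs where a: "a = Atom p xs" by (cases a)
  obtain x where xs: "xs = [x]" "x < length d" using av a
    by (cases p; cases xs) (auto simp: atom_vars_below_def)
  obtain A B C where v: "v = (A,B,C)" by (cases v)
  obtain D E F where w: "w = (D,E,F)" by (cases w)
  have ZA: "d!x \<in> A \<Longrightarrow> e!x \<in> D" and ZB: "d!x \<in> B \<Longrightarrow> e!x \<in> D \<union> E"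
    using vw(3) xs(2) unfolding v w Zcond_alt by auto
  show "forces_atom N w e a"
    using fa vw(2) ZA ZB unfolding forces_atom_def a xs M N phiPQ_def v w
    by (cases p) auto
next
  fix t d u e v assume Z: "((t, d), u, e) \<in> Zmn" and v: "v \<in> W N" and uv: "le N u v"
  have "t \<in> Wa" "u \<in> Wb" "Zcond t d u e" using Z Zmn by auto
  then obtain w where "w \<in> Wa" "qle t w" "Zcond w d v e" "Zcond v e w d"
    using step[of t u v d e] v uv N by auto
  then show "\<exists>w\<in>W M. le M t w \<and> ((w, d), v, e) \<in> Zmn \<and> ((v, e), w, d) \<in> Znm"
    using M Zmn Znm v N by auto
next
  fix t d u e f assume Z: "((t, d), u, e) \<in> Zmn"
  have tu: "t \<in> Wa" "u \<in> Wb" "Zcond t d u e" using Z Zmn by auto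
  obtain A B C where t: "t = (A,B,C)" by (cases t)
  obtain D E F where u: "u = (D,E,F)" by (cases u)
  have "infinite D" using qpB[OF tu(2)] unfolding u quasi_partition_def by auto
  then obtain g where "Zcond t (d@[f]) u (e@[g])" using ext3 tu(3) unfolding t u by blast
  then show "\<exists>g\<in>dom N. ((t, d @ [f]), u, e @ [g]) \<in> Zmn" using tu N Zmn by auto
next
  fix t d u e g assume Z: "((t, d), u, e) \<in> Zmn"
  have tu: "t \<in> Wa" "u \<in> Wb" "Zcond t d u e" using Z Zmn by auto
  obtain A B C where t: "t = (A,B,C)" by (cases t)
  obtain D E F where u: "u = (D,E,F)" by (cases u)
  have "infinite C" "A \<inter> C = {}" "B \<inter> C = {}" using qpA[OF tu(1)] unfolding t quasi_partition_def by auto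
  then obtain f where "Zcond t (d@[f]) u (e@[g])" using ext4 tu(3) unfolding t u by blast
  then show "\<exists>f\<in>dom M. ((t, d @ [f]), u, e @ [g]) \<in> Zmn" using tu M Zmn by auto
qed

lemma qle_refl: "qle s s" unfolding qle_def by (auto split: prod.splits)

lemma qp_W1: "s \<in> W1 \<Longrightarrow> quasi_partition s" unfolding W1_def by auto
lemma qp_W2: "s \<in> W2 \<Longrightarrow> quasi_partition s" unfolding W2_def using qp_ww by auto

lemma step12:
  assumes "t \<in> W1" "u \<in> W2" "v \<in> W2" "qle u v" "Zcond t d u e"
  shows "\<exists>w\<in>W1. qle t w \<and> Zcond w d v e \<and> Zcond v e w d"
proof -
  obtain a1 a2 a3 where t: "t = (a1,a2,a3)" by (cases t)
  obtain c1 c2 c3 where u: "u = (c1,c2,c3)" by (cases u)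
  obtain v1 v2 v3 where v: "v = (v1,v2,v3)" by (cases v)
  have qpt: "quasi_partition (a1,a2,a3)" and vt: "qle vv t" and inf3: "infinite (a2 \<inter> kN 3 1)"
    using assms(1) unfolding W1_def t by auto
  have inf2: "infinite a2" using inf3 by (meson finite_Int)
  obtain w1 w2 w3 where w: "quasi_partition (w1,w2,w3)" "qle (a1,a2,a3) (w1,w2,w3)"
     "a2 - set d \<subseteq> w2" "Zcond (w1,w2,w3) d (v1,v2,v3) e" "Zcond (v1,v2,v3) e (w1,w2,w3) d"
    using build[OF qpt inf2 qle_refl qpt, of c1 c2 c3 v1 v2 v3 d e]
      qp_W2[OF assms(2)] qp_W2[OF assms(3)] assms(4,5) unfolding t u v by blast
  have "(a2 \<inter> kN 3 1) - set d \<subseteq> w2 \<inter> kN 3 1" using w(3) by blast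
  moreover have "infinite ((a2 \<inter> kN 3 1) - set d)" using inf3 by (simp add: Diff_infinite_finite)
  ultimately have "infinite (w2 \<inter> kN 3 1)" using infinite_super by blast
  moreover have "qle vv (w1,w2,w3)" using qle_trans vt w(2) t by blast
  ultimately have "(w1,w2,w3) \<in> W1" using w(1) unfolding W1_def by auto
  then show ?thesis using w t v by blast
qed

lemma step21:
  assumes "t \<in> W2" "u \<in> W1" "v \<in> W1" "qle u v" "Zcond t d u e"
  shows "\<exists>w\<in>W2. qle t w \<and> Zcond w d v e \<and> Zcond v e w d"
proof -
  obtain a1 a2 a3 where t: "t = (a1,a2,a3)" by (cases t)
  obtain c1 c2 c3 where u: "u = (c1,c2,c3)" by (cases u)
  obtain v1 v2 v3 where v: "v = (v1,v2,v3)" by (cases v)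
  have qpt: "quasi_partition (a1,a2,a3)" using qp_W2 assms(1) t by simp
  have wt: "qle ww t" using assms(1) qle_refl[of ww] unfolding W2_def by auto
  obtain b1 b2 b3 where b: "quasi_partition (b1,b2,b3)" "infinite b2" "qle (a1,a2,a3) (b1,b2,b3)"
  proof (cases "t = ww")
    case True
    have "quasi_partition (kN 2 0, kN 4 1, kN 4 3)"
      unfolding quasi_partition_def using kN_inf[of 2 0] kN_inf[of 4 3] kN_inf[of 4 1]
      by (auto simp: kN_iff) presburger+
    moreover have "qle (a1,a2,a3) (kN 2 0, kN 4 1, kN 4 3)"
      using True t unfolding ww_def qle_def by (auto simp: kN_iff) presburger
    ultimately show ?thesis using that kN_inf[of 4 1] by simp
  next
    case False
    then have "a2 \<noteq> {}" using assms(1) t unfolding W2_def by auto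
    then have "infinite a2" using qpt unfolding quasi_partition_def by auto
    then show ?thesis using that qpt qle_refl by blast
  qed
  obtain w1 w2 w3 where w: "quasi_partition (w1,w2,w3)" "qle (a1,a2,a3) (w1,w2,w3)"
     "b2 - set d \<subseteq> w2" "Zcond (w1,w2,w3) d (v1,v2,v3) e" "Zcond (v1,v2,v3) e (w1,w2,w3) d"
    using build[OF b(1,2,3) qpt, of c1 c2 c3 v1 v2 v3 d e]
      qp_W1[OF assms(2)] qp_W1[OF assms(3)] assms(4,5) unfolding t u v by blast
  have "infinite (b2 - set d)" using b(2) by (simp add: Diff_infinite_finite)
  then have "w2 \<noteq> {}" using w(3) by (metis finite.emptyI finite_subset)
  moreover have "qle ww (w1,w2,w3)" using qle_trans wt w(2) t by blast
  ultimately have "(w1,w2,w3) \<in> W2" using w(1) unfolding W2_def by auto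
  then show ?thesis using w t v by blast
qed

theorem lemma5p2:
  shows "CD_asimulation M1 M2 Z12 Z21"
  unfolding CD_asimulation_def
proof
  show "asim_dir M1 M2 Z12 Z21"
    by (rule asim_gen[where Wa=W1 and Wb=W2]) (auto simp: M1_def M2_def Z12_def Z21_def qp_W1 qp_W2 step12)
  show "asim_dir M2 M1 Z21 Z12"
    by (rule asim_gen[where Wa=W2 and Wb=W1]) (auto simp: M1_def M2_def Z12_def Z21_def qp_W1 qp_W2 step21)
qed

end
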